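(* Let \(E\in\mathcal{B}_\infty\) be \(\sigma\)-finite for \(\mu\). Then \((E,\mu)\) is purely nonatomic.
   Context: Let $\mathcal{B}$ be the Borel $\sigma$-algebra of $\mathbb{R}$, $\lambda$ the Lebesgue measure, and $\mathcal{B}_{\infty}$ the $\sigma$-algebra on $\mathbb{R}^{\mathbb{N}}$ generated by the cylinder sets $\prod_{i=1}^{m}C_{i}\times\prod_{i=m+1}^{\infty}\mathbb{R}$ with $C_i\in\mathcal{B}$, $m\in\mathbb{N}$. Let $\mathcal{F}(\mathcal{B},\lambda)$ be the set of finite rectangles $\prod_{i\in\mathbb{N}}C_{i}$ with $C_i\in\mathcal{B}$ and $\prod_{i}\lambda(C_i)\in[0,\infty)$, with $\mathrm{vol}(\prod_{i}C_i):=\prod_i\lambda(C_i)$. The measure $\mu$ is the restriction to $\mathcal{B}_{\infty}$ of the outer measure $\mu^{\ast}(A):=\inf\{\sum_{n}\mathrm{vol}(\mathscr{C}_{n}) : \mathscr{C}_{n}\in\mathcal{F}(\mathcal{B},\lambda),\ A\subset\bigcup_{n}\mathscr{C}_{n}\}$ ($\inf\varnothing=\infty$). A measure space is purely nonatomic if it has no atoms, i.e., no measurable $A$ with positive measure such that every measurable $B\subset A$ has measure $0$ or that of $A$. *)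

theory Defs
  imports "HOL-Analysis.Analysis"
begin

definition cylinders :: "(nat \<Rightarrow> real) set set" where
  "cylinders = {{x. \<forall>i<m. x i \<in> C i} | C m. \<forall>i. C i \<in> sets borel}"

definition B_inf :: "(nat \<Rightarrow> real) set set" where
  "B_inf = sigma_sets UNIV cylinders"

definition rect :: "(nat \<Rightarrow> real set) \<Rightarrow> (nat \<Rightarrow> real) set" where
  "rect C = {x. \<forall>i. x i \<in> C i}"

definition vol :: "(nat \<Rightarrow> real set) \<Rightarrow> ennreal" where
  "vol C = lim (\<lambda>m. \<Prod>i<m. emeasure lborel (C i))"

definition finite_rect :: "(nat \<Rightarrow> real set) \<Rightarrow> bool" where
  "finite_rect C \<longleftrightarrow> (\<forall>i. C i \<in> sets borel) \<and>
     (\<exists>v. v < \<infinity> \<and> ((\<lambda>m. \<Prod>i<m. emeasure lborel (C i)) \<longlongrightarrow> v) sequentially)"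

definition mu_outer :: "(nat \<Rightarrow> real) set \<Rightarrow> ennreal" where
  "mu_outer A = (INF R \<in> {R :: nat \<Rightarrow> nat \<Rightarrow> real set.
       (\<forall>n. finite_rect (R n)) \<and> A \<subseteq> (\<Union>n. rect (R n))}. (\<Sum>n. vol (R n)))"

end

theory Submission
  imports Defs
begin

lemma mu_mono: "A \<subseteq> B \<Longrightarrow> mu_outer A \<le> mu_outer B"
  unfolding mu_outer_def by (rule INF_superset_mono) auto

lemma mu_le_cover:
  assumes "\<And>n. finite_rect (R n)" "A \<subseteq> (\<Union>n. rect (R n))"
  shows "mu_outer A \<le> (\<Sum>n. vol (R n))"
  unfolding mu_outer_def by (rule INF_lower) (use assms in auto)

lemma mu_cover_ex:
  assumes "mu_outer A < x"
  shows "\<exists>R. (\<forall>n. finite_rect (R n)) \<and> A \<subseteq> (\<Union>n. rect (R n)) \<and> (\<Sum>n. vol (R n)) < x"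
  using assms unfolding mu_outer_def INF_less_iff by auto

lemma prod_shift: "(\<Prod>i<Suc k. f i) = f 0 * (\<Prod>i<k. f (Suc i))"
  by (rule prod.lessThan_Suc_shift)

lemma inv_mult_self: "0<a \<Longrightarrow> a<top \<Longrightarrow> inverse a * a = (1::ennreal)"
  by (metis divide_ennreal_def ennreal_divide_self mult.commute order.strict_iff_not)

lemma rect_strip:
  assumes fr: "finite_rect C"
  shows "\<exists>r<\<infinity>. \<forall>I \<in> sets borel. finite_rect (C(0:=C 0 \<inter> I)) \<and>
     vol (C(0:=C 0 \<inter> I)) \<le> r * emeasure lborel (C 0 \<inter> I) \<and> vol (C(0:=C 0 \<inter> I)) \<le> vol C"
proof -
  let ?m = "\<lambda>i. emeasure lborel (C i)"
  define Q where "Q k = (\<Prod>i<k. ?m (Suc i))" for k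
  obtain v where v: "v < \<infinity>" "(\<lambda>m. \<Prod>i<m. ?m i) \<longlonglongrightarrow> v" and sb: "\<forall>i. C i \<in> sets borel"
    using fr unfolding finite_rect_def by auto
  have volC: "vol C = v" unfolding vol_def using v(2) by (rule limI)
  have PS: "(\<Prod>i<Suc k. ?m i) = ?m 0 * Q k" for k unfolding Q_def by (rule prod_shift)
  have P'S: "(\<Prod>i<Suc k. emeasure lborel ((C(0:=C 0 \<inter> I)) i)) = emeasure lborel (C 0 \<inter> I) * Q k" for k I
    unfolding Q_def by (subst prod_shift) simp
  show ?thesis
  proof (cases "?m 0 = 0 \<or> ?m 0 = \<infinity>")
    case True
    have ev: "eventually (\<lambda>k. Q k = 0 \<or> ?m 0 = 0) sequentially"
    proof (cases "?m 0 = 0")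
      case False
      with True have inf: "?m 0 = \<infinity>" by auto
      have "eventually (\<lambda>k. (\<Prod>i<Suc k. ?m i) < \<infinity>) sequentially"
        using order_tendstoD(2)[OF LIMSEQ_Suc[OF v(2)] v(1)] .
      then show ?thesis
        by eventually_elim (simp only: PS inf, simp add: ennreal_mult_less_top)
    qed simp
    show ?thesis
    proof (intro exI[of _ 0] conjI ballI)
      fix I :: "real set" assume I: "I \<in> sets borel"
      have z: "eventually (\<lambda>k. (\<Prod>i<Suc k. emeasure lborel ((C(0:=C 0 \<inter> I)) i)) = 0) sequentially"
        using ev
      proof eventually_elim
        case (elim k)
        have "emeasure lborel (C 0 \<inter> I) \<le> ?m 0" by (intro emeasure_mono) (use sb in auto)
        with elim show ?case by (simp only: P'S) auto
      qed
      have t: "(\<lambda>m. \<Prod>i<m. emeasure lborel ((C(0:=C 0 \<inter> I)) i)) \<longlonglongrightarrow> 0"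
        by (rule LIMSEQ_imp_Suc, rule tendsto_eventually, rule z)
      show "finite_rect (C(0:=C 0 \<inter> I))"
        unfolding finite_rect_def using sb I t by (auto intro!: exI[of _ 0])
      have "vol (C(0:=C 0 \<inter> I)) = 0" unfolding vol_def using t by (rule limI)
      then show "vol (C(0:=C 0 \<inter> I)) \<le> 0 * emeasure lborel (C 0 \<inter> I)"
        "vol (C(0:=C 0 \<inter> I)) \<le> vol C" by auto
    qed simp
  next
    case False
    define a where "a = ?m 0"
    have a: "0 < a" "a < top" using False unfolding a_def by (auto simp: less_top zero_less_iff_neq_zero)
    have ia: "inverse a < top" using a by (simp add: less_top[symmetric])
    have Qeq: "Q k = inverse a * (\<Prod>i<Suc k. ?m i)" for k
    proof -
      have "inverse a * (\<Prod>i<Suc k. ?m i) = (inverse a * a) * Q k" by (simp only: PS a_def mult.assoc)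
      also have "inverse a * a = 1" using a by (simp add: inv_mult_self)
      finally show ?thesis by simp
    qed
    have Qt: "Q \<longlonglongrightarrow> inverse a * v"
      unfolding Qeq[abs_def] by (rule ennreal_tendsto_cmult[OF ia LIMSEQ_Suc[OF v(2)]])
    define r where "r = inverse a * v"
    have r: "r < \<infinity>" unfolding r_def using ia v(1) by (simp add: ennreal_mult_less_top)
    show ?thesis
    proof (intro exI[of _ r] conjI ballI r)
      fix I :: "real set" assume I: "I \<in> sets borel"
      let ?b = "emeasure lborel (C 0 \<inter> I)"
      have b: "?b \<le> a" unfolding a_def by (intro emeasure_mono) (use sb in auto)
      hence bt: "?b < top" using a(2) by (rule le_less_trans)
      have t: "(\<lambda>m. \<Prod>i<m. emeasure lborel ((C(0:=C 0 \<inter> I)) i)) \<longlonglongrightarrow> ?b * r"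
        apply (rule LIMSEQ_imp_Suc)
        unfolding P'S r_def by (rule ennreal_tendsto_cmult[OF bt Qt])
      show "finite_rect (C(0:=C 0 \<inter> I))"
        unfolding finite_rect_def using sb I t bt r
        by (intro conjI allI exI[of _ "?b * r"]) (auto simp: ennreal_mult_less_top)
      have vc: "vol (C(0:=C 0 \<inter> I)) = ?b * r" unfolding vol_def using t by (rule limI)
      then show "vol (C(0:=C 0 \<inter> I)) \<le> r * ?b" by (simp add: mult.commute)
      have "?b * r \<le> a * r" using b by (rule mult_right_mono) simp
      also have "a * r = v" unfolding r_def using a
        by (simp add: mult.assoc[symmetric] mult.commute[of a] inv_mult_self)
      finally show "vol (C(0:=C 0 \<inter> I)) \<le> vol C" using vc volC by simp
    qed
  qed
qed

lemma null_union:
  fixes A :: "nat \<Rightarrow> (nat \<Rightarrow> real) set"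
  assumes "\<And>j. mu_outer (A j) = 0"
  shows "mu_outer (\<Union>j. A j) = 0"
proof -
  have "mu_outer (\<Union>j. A j) \<le> 0"
  proof (rule ennreal_le_epsilon)
    fix e :: real assume e: "0 < e"
    have "\<forall>j. \<exists>R. (\<forall>n. finite_rect (R n)) \<and> A j \<subseteq> (\<Union>n. rect (R n)) \<and>
             (\<Sum>n. vol (R n)) < ennreal (e * (1/2)^Suc j)"
      using e by (intro allI mu_cover_ex) (simp add: assms)
    then obtain R where R: "\<And>j. (\<forall>n. finite_rect (R j n)) \<and> A j \<subseteq> (\<Union>n. rect (R j n)) \<and>
             (\<Sum>n. vol (R j n)) < ennreal (e * (1/2)^Suc j)"
      by metis
    define R' where "R' k = R (fst (prod_decode k)) (snd (prod_decode k))" for k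
    have fr: "\<And>k. finite_rect (R' k)" unfolding R'_def using R by blast
    have cov: "(\<Union>j. A j) \<subseteq> (\<Union>k. rect (R' k))"
    proof
      fix x assume "x \<in> (\<Union>j. A j)"
      then obtain j where "x \<in> A j" by auto
      then obtain n where "x \<in> rect (R j n)" using R by blast
      moreover have "R' (prod_encode (j, n)) = R j n" unfolding R'_def by simp
      ultimately show "x \<in> (\<Union>k. rect (R' k))" by (metis UNIV_I UN_iff)
    qed
    have "mu_outer (\<Union>j. A j) \<le> (\<Sum>k. vol (R' k))" by (rule mu_le_cover[OF fr cov])
    also have "\<dots> = (\<Sum>j. \<Sum>n. vol (R j n))"
      unfolding R'_def using suminf_ennreal_2dimen[of "\<lambda>j. \<Sum>n. vol (R j n)" "\<lambda>(j,n). vol (R j n)"]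
      by (simp add: case_prod_beta)
    also have "\<dots> \<le> (\<Sum>j. ennreal (e * (1/2)^Suc j))"
      by (intro suminf_le summableI) (use R in \<open>auto intro: less_imp_le\<close>)
    also have "\<dots> = ennreal e"
    proof -
      have s: "(\<lambda>j. e * (1/2)^Suc j) sums (e * 1)" by (intro sums_mult power_half_series)
      have "(\<Sum>j. ennreal (e * (1/2)^Suc j)) = ennreal (\<Sum>j. e * (1/2)^Suc j)"
        using s e by (intro suminf_ennreal2) (auto simp: sums_iff)
      then show ?thesis using s by (simp add: sums_iff)
    qed
    finally show "mu_outer (\<Union>j. A j) \<le> 0 + ennreal e" by simp
  qed
  then show ?thesis by simp
qed

lemma B_inf_Int: "X \<in> B_inf \<Longrightarrow> Y \<in> B_inf \<Longrightarrow> X \<inter> Y \<in> B_inf"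
proof -
  have sa: "sigma_algebra UNIV B_inf" unfolding B_inf_def by (rule sigma_algebra_sigma_sets) auto
  assume "X \<in> B_inf" "Y \<in> B_inf"
  interpret sigma_algebra UNIV B_inf by (rule sa)
  show ?thesis using \<open>X \<in> B_inf\<close> \<open>Y \<in> B_inf\<close> by (rule Int)
qed

lemma B_inf_strip: "I \<in> sets borel \<Longrightarrow> {x. x 0 \<in> I} \<in> B_inf"
  unfolding B_inf_def
  by (rule sigma_sets.Basic) (auto simp: cylinders_def intro!: exI[of _ "\<lambda>_. I"] exI[of _ 1])

lemma INF_shrink_zero:
  assumes "(r::ennreal) < top"
  shows "(INF k. min v (r * ennreal (1 / real (Suc k)))) = 0"
proof -
  have t: "(\<lambda>k. r * ennreal (1 / real (Suc k))) \<longlonglongrightarrow> r * ennreal 0"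
    by (intro ennreal_tendsto_cmult assms tendsto_ennrealI LIMSEQ_Suc lim_1_over_n)
  then have t': "(\<lambda>k. r * ennreal (1 / real (Suc k))) \<longlonglongrightarrow> 0" by simp
  have "(INF k. min v (r * ennreal (1 / real (Suc k)))) \<le> 0"
  proof (rule LIMSEQ_le_const[OF t'])
    have "(INF k. min v (r * ennreal (1 / real (Suc k)))) \<le> r * ennreal (1 / real (Suc n))" for n
      by (rule INF_lower2[of n]) auto
    then show "\<exists>N. \<forall>n\<ge>N. (INF k. min v (r * ennreal (1 / real (Suc k)))) \<le> r * ennreal (1 / real (Suc n))"
      by blast
  qed
  then show ?thesis by simp
qed

lemma series_shrink:
  fixes w r :: "nat \<Rightarrow> ennreal"
  assumes "(\<Sum>n. w n) < top" "\<And>n. r n < top" "0 < m"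
  shows "\<exists>k. (\<Sum>n. min (w n) (r n * ennreal (1 / real (Suc k)))) < m"
proof -
  define g where "g k n = min (w n) (r n * ennreal (1 / real (Suc k)))" for k n
  have dec: "decseq g"
  proof (rule decseq_SucI, rule le_funI)
    fix k n
    have "ennreal (1 / real (Suc (Suc k))) \<le> ennreal (1 / real (Suc k))"
      by (intro ennreal_leI frac_le) auto
    then show "g (Suc k) n \<le> g k n" unfolding g_def
      by (intro min.mono order.refl mult_left_mono) auto
  qed
  have fin: "(\<integral>\<^sup>+ n. g 0 n \<partial>count_space UNIV) < \<infinity>"
  proof -
    have "(\<integral>\<^sup>+ n. g 0 n \<partial>count_space UNIV) = (\<Sum>n. g 0 n)" by (rule nn_integral_count_space_nat)
    also have "\<dots> \<le> (\<Sum>n. w n)" unfolding g_def by (intro suminf_le summableI) auto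
    finally show ?thesis using assms(1) by (simp add: le_less_trans)
  qed
  have "(INF k. (\<Sum>n. g k n)) = (INF k. \<integral>\<^sup>+ n. g k n \<partial>count_space UNIV)"
    by (simp add: nn_integral_count_space_nat)
  also have "\<dots> = (\<integral>\<^sup>+ n. (INF k. g k n) \<partial>count_space UNIV)"
    by (rule nn_integral_monotone_convergence_INF_decseq[symmetric, OF dec _ fin]) simp
  also have "\<dots> = 0" unfolding g_def using INF_shrink_zero[OF assms(2)] by simp
  finally have "(INF k. (\<Sum>n. g k n)) < m" using assms(3) by simp
  then show ?thesis unfolding INF_less_iff g_def by auto
qed

theorem corollaryA6:
  fixes E :: "(nat \<Rightarrow> real) set"
  assumes "E \<in> B_inf"
    and "\<exists>F :: nat \<Rightarrow> (nat \<Rightarrow> real) set.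
           (\<forall>n. F n \<in> B_inf \<and> F n \<subseteq> E \<and> mu_outer (F n) < \<infinity>) \<and> E = (\<Union>n. F n)"
  shows "\<not> (\<exists>A. A \<in> B_inf \<and> A \<subseteq> E \<and> mu_outer A > 0 \<and>
            (\<forall>B. B \<in> B_inf \<and> B \<subseteq> A \<longrightarrow> mu_outer B = 0 \<or> mu_outer B = mu_outer A))"
proof
  assume "\<exists>A. A \<in> B_inf \<and> A \<subseteq> E \<and> mu_outer A > 0 \<and>
            (\<forall>B. B \<in> B_inf \<and> B \<subseteq> A \<longrightarrow> mu_outer B = 0 \<or> mu_outer B = mu_outer A)"
  then obtain A where A0: "A \<in> B_inf \<and> A \<subseteq> E \<and> mu_outer A > 0 \<and>
            (\<forall>B. B \<in> B_inf \<and> B \<subseteq> A \<longrightarrow> mu_outer B = 0 \<or> mu_outer B = mu_outer A)" by (elim exE)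
  have A: "A \<in> B_inf" "A \<subseteq> E" "0 < mu_outer A" using A0 by simp_all
  have atom: "\<And>B. B \<in> B_inf \<Longrightarrow> B \<subseteq> A \<Longrightarrow> mu_outer B = 0 \<or> mu_outer B = mu_outer A"
    using A0 by simp
  from assms(2) obtain F :: "nat \<Rightarrow> (nat \<Rightarrow> real) set" where F0: "(\<forall>n. F n \<in> B_inf \<and> F n \<subseteq> E \<and> mu_outer (F n) < \<infinity>) \<and> E = (\<Union>n. F n)"
    by (elim exE)
  have F: "\<And>n. F n \<in> B_inf" "\<And>n. mu_outer (F n) < \<infinity>" "E = (\<Union>n. F n)" using F0 by simp_all
  show False
  proof (cases "mu_outer A = \<infinity>")
    case True
    have "\<exists>n. mu_outer (A \<inter> F n) \<noteq> 0"
    proof (rule ccontr)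
      assume "\<not> ?thesis"
      then have "mu_outer (\<Union>n. A \<inter> F n) = 0" by (intro null_union) auto
      moreover have "(\<Union>n. A \<inter> F n) = A" using A(2) F(3) by auto
      ultimately show False using A(3) by simp
    qed
    then obtain n where n: "mu_outer (A \<inter> F n) \<noteq> 0" by blast
    have "mu_outer (A \<inter> F n) \<le> mu_outer (F n)" by (rule mu_mono) auto
    then have "mu_outer (A \<inter> F n) \<noteq> mu_outer A" using F(2)[of n] True by auto
    with n atom[of "A \<inter> F n"] B_inf_Int[OF A(1) F(1)] show False by auto
  next
    case False
    define m where "m = mu_outer A"
    have mt: "mu_outer A < top" using False by (simp add: less_top)
    obtain R where R: "\<And>n. finite_rect (R n)" "A \<subseteq> (\<Union>n. rect (R n))" "(\<Sum>n. vol (R n)) < top"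
      using mu_cover_ex[OF mt] by blast
    have "\<forall>n. \<exists>r<\<infinity>. \<forall>I \<in> sets borel. finite_rect ((R n)(0:=R n 0 \<inter> I)) \<and>
     vol ((R n)(0:=R n 0 \<inter> I)) \<le> r * emeasure lborel (R n 0 \<inter> I) \<and> vol ((R n)(0:=R n 0 \<inter> I)) \<le> vol (R n)"
      using rect_strip R(1) by simp
    from choice[OF this] obtain r where r0: "\<forall>n. r n < \<infinity> \<and> (\<forall>I \<in> sets borel. finite_rect ((R n)(0:=R n 0 \<inter> I)) \<and>
     vol ((R n)(0:=R n 0 \<inter> I)) \<le> r n * emeasure lborel (R n 0 \<inter> I) \<and> vol ((R n)(0:=R n 0 \<inter> I)) \<le> vol (R n))"
      by blast
    have r: "\<And>n. r n < \<infinity>" "\<And>n I. I \<in> sets borel \<Longrightarrow> finite_rect ((R n)(0:=R n 0 \<inter> I)) \<and>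
     vol ((R n)(0:=R n 0 \<inter> I)) \<le> r n * emeasure lborel (R n 0 \<inter> I) \<and> vol ((R n)(0:=R n 0 \<inter> I)) \<le> vol (R n)"
      using r0 by auto
    obtain k where k: "(\<Sum>n. min (vol (R n)) (r n * ennreal (1 / real (Suc k)))) < m"
    proof -
      have "\<And>n. r n < top" using r(1) by simp
      then show ?thesis using series_shrink[of "\<lambda>n. vol (R n)" r m] R(3) A(3) that unfolding m_def by blast
    qed
    define L where "L = 1 / real (Suc k)"
    have L: "0 < L" unfolding L_def by simp
    define I where "I j = {real_of_int (int_decode j) * L ..< real_of_int (int_decode j) * L + L}" for j
    have "\<exists>j. mu_outer (A \<inter> {x. x 0 \<in> I j}) \<noteq> 0"
    proof (rule ccontr)
      assume "\<not> ?thesis"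
      then have "mu_outer (\<Union>j. A \<inter> {x. x 0 \<in> I j}) = 0" by (intro null_union) auto
      moreover have "(\<Union>j. A \<inter> {x. x 0 \<in> I j}) = A"
      proof (intro equalityI subsetI)
        fix x assume x: "x \<in> A"
        define z where "z = floor (x 0 / L)"
        have "real_of_int z \<le> x 0 / L" "x 0 / L < real_of_int z + 1" unfolding z_def by linarith+
        then have "real_of_int z * L \<le> x 0" "x 0 < real_of_int z * L + L"
          using L by (simp_all add: field_simps)
        then have "x 0 \<in> I (int_encode z)" unfolding I_def by simp
        then show "x \<in> (\<Union>j. A \<inter> {x. x 0 \<in> I j})" using x by blast
      qed auto
      ultimately show False using A(3) by simp
    qed
    then obtain j where j: "mu_outer (A \<inter> {x. x 0 \<in> I j}) \<noteq> 0" by blast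
    have Ib: "I j \<in> sets borel" unfolding I_def by simp
    have Bin: "A \<inter> {x. x 0 \<in> I j} \<in> B_inf" by (intro B_inf_Int A(1) B_inf_strip Ib)
    have eqm: "mu_outer (A \<inter> {x. x 0 \<in> I j}) = m"
      using atom[OF Bin] j unfolding m_def by auto
    define R' where "R' n = (R n)(0 := R n 0 \<inter> I j)" for n
    have fr: "\<And>n. finite_rect (R' n)" unfolding R'_def using r(2)[OF Ib] by blast
    have cov: "A \<inter> {x. x 0 \<in> I j} \<subseteq> (\<Union>n. rect (R' n))"
    proof
      fix x assume x: "x \<in> A \<inter> {x. x 0 \<in> I j}"
      then obtain n where "x \<in> rect (R n)" using R(2) by blast
      then have "x \<in> rect (R' n)" using x unfolding rect_def R'_def by auto
      then show "x \<in> (\<Union>n. rect (R' n))" by blast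
    qed
    have "m \<le> (\<Sum>n. vol (R' n))" using mu_le_cover[OF fr cov] eqm by simp
    also have "\<dots> \<le> (\<Sum>n. min (vol (R n)) (r n * ennreal (1 / real (Suc k))))"
    proof (intro suminf_le summableI)
      fix n
      have "emeasure lborel (R n 0 \<inter> I j) \<le> emeasure lborel (I j)"
        using Ib by (intro emeasure_mono) auto
      also have "\<dots> = ennreal L" unfolding I_def using L by simp
      finally have "r n * emeasure lborel (R n 0 \<inter> I j) \<le> r n * ennreal L" by (rule mult_left_mono) simp
      then show "vol (R' n) \<le> min (vol (R n)) (r n * ennreal (1 / real (Suc k)))"
        using r(2)[OF Ib, of n] unfolding R'_def L_def by auto
    qed
    also have "\<dots> < m" by (rule k)
    finally show False by simp
  qed
qed

end
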